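(* Let $A$ be an independent set of the matroid $\mathcal M$ and let $V$ be an independent set of the contracted matroid $\mathcal M/A$. Then $$\sum_{i\in V}b_i(A)\ \le\ \mathbb{E}_{\hat{\mathbf v}}[R(A,\hat{\mathbf v})].$$
   Context: Matroid $\mathcal M=([n],\mathcal I)$; $\hat{\mathbf v}=(\hat v_1,\dots,\hat v_n)$ is a random vector of nonnegative values with independent coordinates. For an independent set $A$, $\mathrm{Opt}(\hat{\mathbf v}\mid A)\subseteq[n]\setminus A$ is a maximum-value independent set of the contracted matroid $\mathcal M/A$ with weights $\hat{\mathbf v}$, $R(A,\hat{\mathbf v})=\sum_{i\in\mathrm{Opt}(\hat{\mathbf v}\mid A)}\hat v_i$ (with $R(A\cup\{i\},\hat{\mathbf v})$ defined analogously when $A\cup\{i\}$ is independent), and $b_i(A)=\mathbb{E}_{\hat{\mathbf v}}[R(A,\hat{\mathbf v})-R(A\cup\{i\},\hat{\mathbf v})]$. *)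

theory Defs
  imports "HOL-Probability.Probability"
begin

definition matroid :: "'a set \<Rightarrow> ('a set \<Rightarrow> bool) \<Rightarrow> bool" where
  "matroid E indep \<longleftrightarrow>
     finite E \<and>
     (\<forall>X. indep X \<longrightarrow> X \<subseteq> E) \<and>
     indep {} \<and>
     (\<forall>X Y. indep Y \<and> X \<subseteq> Y \<longrightarrow> indep X) \<and>
     (\<forall>X Y. indep X \<and> indep Y \<and> card X < card Y \<longrightarrow>
        (\<exists>y \<in> Y - X. indep (insert y X)))"

text \<open>Independent sets of the contraction M/A (A independent in M).\<close>
definition contr_indep :: "'a set \<Rightarrow> ('a set \<Rightarrow> bool) \<Rightarrow> 'a set \<Rightarrow> 'a set \<Rightarrow> bool" where
  "contr_indep E indep A S \<longleftrightarrow> S \<subseteq> E - A \<and> indep (A \<union> S)"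

text \<open>R(A,v): value of a maximum-weight independent set Opt(v|A) of M/A.\<close>
definition opt_val :: "'a set \<Rightarrow> ('a set \<Rightarrow> bool) \<Rightarrow> 'a set \<Rightarrow> ('a \<Rightarrow> real) \<Rightarrow> real" where
  "opt_val E indep A v = Max ((\<lambda>S. \<Sum>i\<in>S. v i) ` {S. contr_indep E indep A S})"

text \<open>b_i(A) = E[R(A,v) - R(A+i,v)] (a nonnegative quantity, taken in [0,\<infinity>]).\<close>
definition bval :: "'a set \<Rightarrow> ('a set \<Rightarrow> bool) \<Rightarrow> ('a \<Rightarrow> real) measure \<Rightarrow> 'a set \<Rightarrow> 'a \<Rightarrow> ennreal" where
  "bval E indep P A i =
     (\<integral>\<^sup>+ v. ennreal (opt_val E indep A v - opt_val E indep (insert i A) v) \<partial>P)"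

end

theory Submission
  imports Defs
begin


lemma m_fin: "matroid E ind \<Longrightarrow> finite E" by (simp add: matroid_def)
lemma m_sub: "matroid E ind \<Longrightarrow> ind X \<Longrightarrow> X \<subseteq> E" by (simp add: matroid_def)
lemma m_finX: "matroid E ind \<Longrightarrow> ind X \<Longrightarrow> finite X"
  using m_fin m_sub finite_subset by metis
lemma m_down: "matroid E ind \<Longrightarrow> ind Y \<Longrightarrow> X \<subseteq> Y \<Longrightarrow> ind X" unfolding matroid_def by blast
lemma m_empty: "matroid E ind \<Longrightarrow> ind {}" by (simp add: matroid_def)
lemma m_aug: "matroid E ind \<Longrightarrow> ind X \<Longrightarrow> ind Y \<Longrightarrow> card X < card Y \<Longrightarrow> \<exists>y\<in>Y - X. ind (insert y X)"
  by (simp add: matroid_def)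

lemma m_extend:
  assumes M: "matroid E ind" and I: "ind I" "I \<subseteq> S"
  shows "\<exists>B. I \<subseteq> B \<and> B \<subseteq> S \<and> ind B \<and> (\<forall>Y. Y \<subseteq> S \<and> ind Y \<longrightarrow> card Y \<le> card B)"
proof -
  define F where "F = {B. I \<subseteq> B \<and> B \<subseteq> S \<and> ind B}"
  have "F \<subseteq> Pow E" using m_sub[OF M] by (auto simp: F_def)
  hence finF: "finite F" using m_fin[OF M] by (meson finite_Pow_iff finite_subset)
  have "I \<in> F" using I by (auto simp: F_def)
  hence ne: "card ` F \<noteq> {}" by auto
  obtain B where B: "B \<in> F" "card B = Max (card ` F)"
    using Max_in[OF finite_imageI[OF finF] ne] by auto
  have maxB: "card B' \<le> card B" if "B' \<in> F" for B'
    using B(2) Max_ge[OF finite_imageI[OF finF]] that by auto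
  show ?thesis
  proof (intro exI[of _ B] conjI allI impI)
    fix Y assume Y: "Y \<subseteq> S \<and> ind Y"
    show "card Y \<le> card B"
    proof (rule ccontr)
      assume "\<not> card Y \<le> card B"
      then obtain y where y: "y \<in> Y - B" "ind (insert y B)"
        using m_aug[OF M, of B Y] B(1) Y by (auto simp: F_def)
      have "insert y B \<in> F" using y Y B(1) by (auto simp: F_def)
      hence "card (insert y B) \<le> card B" by (rule maxB)
      moreover have "finite B" using m_finX[OF M] B(1) by (auto simp: F_def)
      ultimately show False using y by simp
    qed
  qed (use B(1) in \<open>auto simp: F_def\<close>)
qed

lemma keyK:
  assumes M: "matroid E ind" and PI: "ind (insert i (insert k P))" and "i \<notin> P" "k \<notin> P" "i \<noteq> k"
    and Q: "ind Q" and kQ: "k \<notin> Q" and dep: "\<not> ind (insert k Q)"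
  shows "\<exists>q\<in>Q. q \<noteq> i \<and> ind (insert q (insert i P)) \<and> ind (insert k (Q - {q}))"
proof -
  define C where "C = {q\<in>Q. ind (insert k (Q - {q}))}"
  have finQ: "finite Q" using m_finX[OF M Q] .
  have a: "\<not> ind (insert k C)"
  proof
    assume kC: "ind (insert k C)"
    obtain B where B: "insert k C \<subseteq> B" "B \<subseteq> insert k Q" "ind B"
      "\<forall>Y. Y \<subseteq> insert k Q \<and> ind Y \<longrightarrow> card Y \<le> card B"
      using m_extend[OF M kC, of "insert k Q"] by (auto simp: C_def)
    have cQ: "card Q \<le> card B" using B(4) Q by auto
    have "B \<noteq> insert k Q" using B(3) dep by auto
    then obtain q0 where q0: "q0 \<in> Q" "q0 \<notin> B" using B(1,2) by auto
    have sub: "B \<subseteq> insert k (Q - {q0})" using B(2) q0 by auto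
    have "card (insert k (Q - {q0})) = card Q" using finQ q0 kQ
      by (simp add: card_Diff_singleton_if) (metis Suc_pred card_gt_0_iff empty_iff)
    hence "B = insert k (Q - {q0})"
      using card_seteq[OF _ sub] finQ cQ by simp
    hence "q0 \<in> C" using B(3) q0 by (simp add: C_def)
    thus False using B(1) q0 by auto
  qed
  show ?thesis
  proof (rule ccontr)
    assume H: "\<not> ?thesis"
    define Z where "Z = insert i P"
    have H': "\<And>q. q \<in> C \<Longrightarrow> q \<noteq> i \<Longrightarrow> \<not> ind (insert q Z)"
      using H unfolding C_def Z_def by auto
    have Zi: "ind Z" using m_down[OF M PI, of Z] by (auto simp: Z_def)
    obtain B' where B': "Z \<subseteq> B'" "B' \<subseteq> Z \<union> C" "ind B'"
      "\<forall>Y. Y \<subseteq> Z \<union> C \<and> ind Y \<longrightarrow> card Y \<le> card B'"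
      using m_extend[OF M Zi, of "Z \<union> C"] by auto
    have "B' = Z"
    proof (rule ccontr)
      assume "B' \<noteq> Z"
      then obtain c where c: "c \<in> B'" "c \<notin> Z" using B'(1) by auto
      hence "c \<in> C" "c \<noteq> i" using B'(2) by (auto simp: Z_def)
      moreover have "ind (insert c Z)" using m_down[OF M B'(3)] c B'(1) by auto
      ultimately show False using H' by blast
    qed
    have Ci: "ind C" using m_down[OF M Q] by (auto simp: C_def)
    obtain B where B: "C \<subseteq> B" "B \<subseteq> Z \<union> C" "ind B"
      "\<forall>Y. Y \<subseteq> Z \<union> C \<and> ind Y \<longrightarrow> card Y \<le> card B"
      using m_extend[OF M Ci, of "Z \<union> C"] by auto
    have cB: "card B \<le> card Z" using B'(4) B(2,3) \<open>B' = Z\<close> by auto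
    have kZ: "ind (insert k Z)" using PI by (simp add: Z_def insert_commute)
    have finZ: "finite Z" using m_finX[OF M Zi] .
    have "k \<notin> Z" using assms by (auto simp: Z_def)
    hence "card (insert k Z) = Suc (card Z)" using finZ by simp
    then obtain y where y: "y \<in> insert k Z - B" "ind (insert y B)"
      using m_aug[OF M B(3) kZ] cB by auto
    have finB: "finite B" using m_finX[OF M B(3)] .
    show False
    proof (cases "y \<in> Z")
      case True
      hence "card (insert y B) \<le> card B" using B(4) B(2) y by auto
      thus False using y finB by simp
    next
      case False
      hence "y = k" using y by auto
      hence "ind (insert k C)" using m_down[OF M y(2), of "insert k C"] B(1) by auto
      thus False using a by simp
    qed
  qed
qed

definition cind :: "'a set \<Rightarrow> ('a set \<Rightarrow> bool) \<Rightarrow> 'a set \<Rightarrow> bool" where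
  "cind U ind X \<longleftrightarrow> X \<inter> U = {} \<and> ind (U \<union> X)"

lemma contr_matroid:
  assumes M: "matroid E ind" and U: "ind U"
  shows "matroid (E - U) (cind U ind)"
  unfolding matroid_def
proof (intro conjI allI impI)
  show "finite (E - U)" using m_fin[OF M] by simp
  show "cind U ind {}" using U by (simp add: cind_def)
next
  fix X assume "cind U ind X" thus "X \<subseteq> E - U" using m_sub[OF M] by (auto simp: cind_def)
next
  fix X Y assume "cind U ind Y \<and> X \<subseteq> Y"
  hence "U \<union> X \<subseteq> U \<union> Y" "ind (U \<union> Y)" "X \<inter> U = {}" by (auto simp: cind_def)
  thus "cind U ind X" using m_down[OF M, of "U \<union> Y" "U \<union> X"] by (auto simp: cind_def)
next
  fix X Y assume H: "cind U ind X \<and> cind U ind Y \<and> card X < card Y"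
  have fU: "finite U" using m_finX[OF M U] .
  have fX: "finite X" "finite Y" using H m_finX[OF M, of "U \<union> X"] m_finX[OF M, of "U \<union> Y"] by (auto simp: cind_def)
  have "card (U \<union> X) = card U + card X" "card (U \<union> Y) = card U + card Y"
    using H fU fX by (auto simp: cind_def card_Un_disjoint inf_commute)
  hence "card (U \<union> X) < card (U \<union> Y)" using H by simp
  then obtain y where "y \<in> (U \<union> Y) - (U \<union> X)" "ind (insert y (U \<union> X))"
    using m_aug[OF M] H by (auto simp: cind_def) blast
  thus "\<exists>y\<in>Y - X. cind U ind (insert y X)" using H by (auto simp: cind_def)
qed

lemma opt_fin:
  assumes M: "matroid E ind" shows "finite {S. contr_indep E ind A S}"
proof -
  have "{S. contr_indep E ind A S} \<subseteq> Pow E" by (auto simp: contr_indep_def)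
  thus ?thesis using m_fin[OF M] by (meson finite_Pow_iff finite_subset)
qed

lemma opt_ge:
  assumes M: "matroid E ind" and S: "contr_indep E ind A S"
  shows "sum v S \<le> opt_val E ind A v"
  unfolding opt_val_def using S opt_fin[OF M] by (intro Max_ge) auto

lemma opt_obt:
  assumes M: "matroid E ind" and A: "ind A" "A \<subseteq> E"
  obtains J where "contr_indep E ind A J" "opt_val E ind A v = sum v J"
proof -
  have "contr_indep E ind A {}" using A by (simp add: contr_indep_def)
  hence ne: "(\<lambda>S. \<Sum>i\<in>S. v i) ` {S. contr_indep E ind A S} \<noteq> {}" by auto
  from Max_in[OF finite_imageI[OF opt_fin[OF M]] ne] that show ?thesis
    unfolding opt_val_def by auto
qed

lemma opt_nonneg:
  assumes M: "matroid E ind" and A: "ind A" "A \<subseteq> E"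
  shows "0 \<le> opt_val E ind A v"
  using opt_ge[OF M, of A "{}" v] A by (simp add: contr_indep_def)

lemma opt_mono:
  assumes M: "matroid E ind" and A: "ind (insert i A)" "i \<notin> A"
  shows "opt_val E ind (insert i A) v \<le> opt_val E ind A v"
proof -
  have iA: "insert i A \<subseteq> E" using m_sub[OF M A(1)] .
  obtain J where J: "contr_indep E ind (insert i A) J" "opt_val E ind (insert i A) v = sum v J"
    using opt_obt[OF M A(1) iA] by blast
  have "contr_indep E ind A J" using J(1) m_down[OF M, of "insert i A \<union> J" "A \<union> J"] by (auto simp: contr_indep_def)
  thus ?thesis using J(2) opt_ge[OF M] by metis
qed

lemma supermod:
  assumes M: "matroid E ind" and I: "ind (insert i (insert k A))"
    and iA: "i \<notin> A" and kA: "k \<notin> A" and ik: "i \<noteq> k"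
  shows "opt_val E ind A v + opt_val E ind (insert i (insert k A)) v
         \<le> opt_val E ind (insert i A) v + opt_val E ind (insert k A) v"
proof -
  have sE: "insert i (insert k A) \<subseteq> E" using m_sub[OF M I] .
  have A: "ind A" "A \<subseteq> E" using m_down[OF M I, of A] sE by auto
  obtain J where J: "contr_indep E ind (insert i (insert k A)) J"
      "opt_val E ind (insert i (insert k A)) v = sum v J"
    using opt_obt[OF M I sE] by blast
  obtain J0 where J0: "contr_indep E ind A J0" "opt_val E ind A v = sum v J0"
    using opt_obt[OF M A] by blast
  have fJ: "finite J" "finite J0" using J(1) J0(1) m_fin[OF M] finite_subset
    by (auto simp: contr_indep_def)
  have JA: "ind (insert i (insert k (A \<union> J)))" "J \<subseteq> E" "i \<notin> J" "k \<notin> J" "J \<inter> A = {}"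
    using J(1) by (auto simp: contr_indep_def)
  have J0A: "ind (A \<union> J0)" "J0 \<subseteq> E" "J0 \<inter> A = {}" using J0(1) by (auto simp: contr_indep_def)
  have goal: "?thesis" if Ji: "contr_indep E ind (insert i A) Ji" and Jk: "contr_indep E ind (insert k A) Jk"
     and w: "sum v J + sum v J0 \<le> sum v Ji + sum v Jk" for Ji Jk
    using opt_ge[OF M Ji, of v] opt_ge[OF M Jk, of v] w J(2) J0(2) by linarith
  show ?thesis
  proof (cases "k \<in> J0")
    case True
    show ?thesis
    proof (rule goal[of "insert k J" "J0 - {k}"])
      show "contr_indep E ind (insert i A) (insert k J)"
        using JA sE ik kA by (auto simp: contr_indep_def insert_commute)
      show "contr_indep E ind (insert k A) (J0 - {k})"
        proof -
          have "insert k (A \<union> (J0 - {k})) = A \<union> J0" using True by auto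
          thus ?thesis using J0A True by (auto simp: contr_indep_def)
        qed
      show "sum v J + sum v J0 \<le> sum v (insert k J) + sum v (J0 - {k})"
        using True fJ JA by (simp add: sum_diff1)
    qed
  next
    case kJ0: False
    show ?thesis
    proof (cases "ind (insert k (A \<union> J0))")
      case True
      show ?thesis
      proof (rule goal[of J J0])
        show "contr_indep E ind (insert i A) J"
          using JA m_down[OF M JA(1), of "insert i A \<union> J"] by (auto simp: contr_indep_def)
        show "contr_indep E ind (insert k A) J0"
          using J0A True kJ0 by (auto simp: contr_indep_def)
      qed simp
    next
      case dep: False
      define U where "U = A \<union> (J \<inter> J0)"
      have U: "ind U" using m_down[OF M J0A(1), of U] by (auto simp: U_def)
      note CM = contr_matroid[OF M U]
      define P where "P = J - J0"
      define Q where "Q = J0 - J"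
      have e1: "U \<union> insert i (insert k P) = insert i (insert k (A \<union> J))"
        by (auto simp: U_def P_def)
      have c1: "cind U ind (insert i (insert k P))"
        unfolding cind_def e1 using JA iA kA by (auto simp: U_def P_def)
      have e2: "U \<union> Q = A \<union> J0" by (auto simp: U_def Q_def)
      have c2: "cind U ind Q" unfolding cind_def e2 using J0A
        by (auto simp: U_def Q_def)
      have e3: "U \<union> insert k Q = insert k (A \<union> J0)" by (auto simp: U_def Q_def)
      have c3: "\<not> cind U ind (insert k Q)" unfolding cind_def e3 using dep by simp
      obtain q where q: "q \<in> Q" "q \<noteq> i" "cind U ind (insert q (insert i P))"
          "cind U ind (insert k (Q - {q}))"
        using keyK[OF CM c1 _ _ ik c2 _ c3] JA kJ0 by (auto simp: P_def Q_def)
      show ?thesis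
      proof (rule goal[of "insert q J" "J0 - {q}"])
        have "U \<union> insert q (insert i P) = insert i (A \<union> insert q J)"
          by (auto simp: U_def P_def)
        thus "contr_indep E ind (insert i A) (insert q J)"
          using q JA J0A iA by (auto simp: contr_indep_def cind_def Q_def insert_commute)
        have "U \<union> insert k (Q - {q}) = insert k A \<union> (J0 - {q})"
          using q(1) by (auto simp: U_def Q_def)
        thus "contr_indep E ind (insert k A) (J0 - {q})"
          using q JA J0A kJ0 by (auto simp: contr_indep_def cind_def)
        have "q \<in> J0" "q \<notin> J" using q(1) by (auto simp: Q_def)
        thus "sum v J + sum v J0 \<le> sum v (insert q J) + sum v (J0 - {q})"
          using fJ by (simp add: sum_diff1)
      qed
    qed
  qed
qed


lemma telescope:
  assumes M: "matroid E ind"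
  shows "finite V \<Longrightarrow> ind (A \<union> V) \<Longrightarrow> V \<inter> A = {} \<Longrightarrow>
    (\<Sum>i\<in>V. opt_val E ind A v - opt_val E ind (insert i A) v) \<le> opt_val E ind A v - opt_val E ind (A \<union> V) v"
proof (induction V arbitrary: A rule: finite_induct)
  case empty thus ?case by simp
next
  case (insert x V)
  have IH: "(\<Sum>i\<in>V. opt_val E ind (insert x A) v - opt_val E ind (insert i (insert x A)) v)
      \<le> opt_val E ind (insert x A) v - opt_val E ind (insert x A \<union> V) v"
    using insert by (intro insert.IH) auto
  have "opt_val E ind A v - opt_val E ind (insert i A) v
        \<le> opt_val E ind (insert x A) v - opt_val E ind (insert i (insert x A)) v" if i: "i \<in> V" for i
  proof -
    have "ind (insert i (insert x A))" using m_down[OF M insert.prems(1), of "insert i (insert x A)"] i by auto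
    hence "opt_val E ind A v + opt_val E ind (insert i (insert x A)) v
         \<le> opt_val E ind (insert i A) v + opt_val E ind (insert x A) v"
      using supermod[OF M, of i x A v] i insert by auto
    thus ?thesis by linarith
  qed
  hence "(\<Sum>i\<in>V. opt_val E ind A v - opt_val E ind (insert i A) v)
     \<le> (\<Sum>i\<in>V. opt_val E ind (insert x A) v - opt_val E ind (insert i (insert x A)) v)"
    by (rule sum_mono)
  moreover have "insert x A \<union> V = A \<union> insert x V" by auto
  ultimately show ?case using IH insert by simp
qed


theorem lemma7:
  fixes n :: nat
    and indep :: "nat set \<Rightarrow> bool"
    and D :: "nat \<Rightarrow> real measure"
    and A V :: "nat set"
  assumes "matroid {..<n} indep"
    and "\<And>i. i < n \<Longrightarrow> prob_space (D i)"
    and "\<And>i. i < n \<Longrightarrow> sets (D i) = sets borel"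
    and "\<And>i. i < n \<Longrightarrow> (AE x in D i. 0 \<le> x)"
    and "indep A"
    and "contr_indep {..<n} indep A V"
  shows "(\<Sum>i\<in>V. bval {..<n} indep (PiM {..<n} D) A i)
           \<le> (\<integral>\<^sup>+ v. ennreal (opt_val {..<n} indep A v) \<partial>(PiM {..<n} D))"
proof -
  note M = assms(1)
  let ?P = "PiM {..<n} D"
  let ?o = "\<lambda>B v. opt_val {..<n} indep B v"
  have comp: "(\<lambda>v. v i) \<in> borel_measurable ?P" if "i < n" for i
  proof -
    have "(\<lambda>v. v i) \<in> measurable ?P (D i)" by (rule measurable_component_singleton) (simp add: that)
    moreover have "measurable ?P (D i) = measurable ?P borel"
      by (rule measurable_cong_sets[OF refl assms(3)[OF that]])
    ultimately show ?thesis by simp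
  qed
  have msum: "(\<lambda>v. \<Sum>i\<in>S. v i) \<in> borel_measurable ?P" if "S \<subseteq> {..<n}" for S
    using comp that by (intro borel_measurable_sum) auto
  have mopt: "?o B \<in> borel_measurable ?P" for B
    unfolding opt_val_def
    by (rule borel_measurable_Max[OF opt_fin[OF M]]) (rule msum, auto simp: contr_indep_def)
  have VA: "V \<subseteq> {..<n}" "V \<inter> A = {}" "indep (A \<union> V)" using assms(6) by (auto simp: contr_indep_def)
  have finV: "finite V" using VA(1) finite_subset by blast
  have Asub: "A \<subseteq> {..<n}" using m_sub[OF M assms(5)] .
  have dnn: "0 \<le> ?o A v - ?o (insert i A) v" if "i \<in> V" for i v
  proof -
    have "indep (insert i A)" using m_down[OF M VA(3), of "insert i A"] that by auto
    thus ?thesis using opt_mono[OF M, of i A v] that VA(2) by auto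
  qed
  have "(\<Sum>i\<in>V. bval {..<n} indep ?P A i)
      = (\<Sum>i\<in>V. \<integral>\<^sup>+ v. ennreal (?o A v - ?o (insert i A) v) \<partial>?P)"
    by (simp add: bval_def)
  also have "\<dots> = (\<integral>\<^sup>+ v. (\<Sum>i\<in>V. ennreal (?o A v - ?o (insert i A) v)) \<partial>?P)"
    by (rule nn_integral_sum[symmetric]) (intro measurable_compose[OF borel_measurable_diff[OF mopt mopt] measurable_ennreal])
  also have "\<dots> = (\<integral>\<^sup>+ v. ennreal (\<Sum>i\<in>V. ?o A v - ?o (insert i A) v) \<partial>?P)"
    using dnn by (intro nn_integral_cong) (simp add: sum_ennreal)
  also have "\<dots> \<le> (\<integral>\<^sup>+ v. ennreal (?o A v) \<partial>?P)"
  proof (rule nn_integral_mono, rule ennreal_leI)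
    fix v
    have "(\<Sum>i\<in>V. ?o A v - ?o (insert i A) v) \<le> ?o A v - ?o (A \<union> V) v"
      using telescope[OF M finV VA(3) VA(2)] .
    moreover have "0 \<le> ?o (A \<union> V) v" using opt_nonneg[OF M VA(3)] VA(1) Asub by auto
    ultimately show "(\<Sum>i\<in>V. ?o A v - ?o (insert i A) v) \<le> ?o A v" by linarith
  qed
  finally show ?thesis .
qed

end
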